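(* Let $X$ be a topological vector space over $\mathbb{K}$, let $M\subset X$, and let $\alpha\ge\aleph_0$ be a cardinal with $w(X)\le\alpha$. Then $M$ is $\alpha$-dense-lineable if and only if $M$ is $\alpha$-infinitely $\alpha$-dense-lineable.
   Context: The weight $w(X)$ is the smallest cardinality of a base for the topology of $X$. $M$ is $\beta$-dense-lineable if there is a dense linear subspace $Y$ of $X$ with $\dim(Y)=\beta$ and $Y\subset M\cup\{0\}$. For cardinals $\alpha\ge\aleph_0$ and $\beta$, $M$ is $\alpha$-infinitely $\beta$-dense-lineable if there is a family $\{Y_\kappa\}_{\kappa<\alpha}$ of dense linear subspaces of $X$, each of dimension $\beta$, with $Y_\kappa\subset M\cup\{0\}$ for each $\kappa<\alpha$ and $Y_{\kappa_1}\cap Y_{\kappa_2}=\{0\}$ for $\kappa_1\neq\kappa_2$. *)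

theory Defs
  imports "HOL-Analysis.Analysis"
begin

definition tvs :: "('k::{field,topological_space} \<Rightarrow> 'a::{ab_group_add,topological_space} \<Rightarrow> 'a) \<Rightarrow> bool" where
  "tvs sc \<longleftrightarrow> vector_space sc
     \<and> continuous_on UNIV (\<lambda>(x::'a, y::'a). x + y)
     \<and> continuous_on UNIV (\<lambda>(c::'k, x::'a). sc c x)"

definition weight_le :: "'c set \<Rightarrow> 'a::topological_space itself \<Rightarrow> bool" where
  "weight_le A _ \<longleftrightarrow> (\<exists>\<B>::'a set set. topological_basis \<B> \<and> (card_of \<B>, card_of A) \<in> ordLeq)"

definition subspace_of_dim :: "('k::field \<Rightarrow> 'a::ab_group_add \<Rightarrow> 'a) \<Rightarrow> 'a set \<Rightarrow> 'c set \<Rightarrow> bool" where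
  "subspace_of_dim sc Y A \<longleftrightarrow> module.subspace sc Y
     \<and> (\<exists>B. \<not> module.dependent sc B \<and> module.span sc B = Y \<and> (card_of B, card_of A) \<in> ordIso)"

definition dense_lineable ::
  "('k::field \<Rightarrow> 'a::{ab_group_add,topological_space} \<Rightarrow> 'a) \<Rightarrow> 'a set \<Rightarrow> 'c set \<Rightarrow> bool" where
  "dense_lineable sc M A \<longleftrightarrow>
     (\<exists>Y. subspace_of_dim sc Y A \<and> closure Y = UNIV \<and> Y \<subseteq> M \<union> {0})"

definition inf_dense_lineable ::
  "('k::field \<Rightarrow> 'a::{ab_group_add,topological_space} \<Rightarrow> 'a) \<Rightarrow> 'a set \<Rightarrow> 'i set \<Rightarrow> 'c set \<Rightarrow> bool" where
  "inf_dense_lineable sc M I A \<longleftrightarrow>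
     (\<exists>Y :: 'i \<Rightarrow> 'a set.
        (\<forall>\<kappa>\<in>I. subspace_of_dim sc (Y \<kappa>) A \<and> closure (Y \<kappa>) = UNIV \<and> Y \<kappa> \<subseteq> M \<union> {0})
      \<and> (\<forall>\<kappa>1\<in>I. \<forall>\<kappa>2\<in>I. \<kappa>1 \<noteq> \<kappa>2 \<longrightarrow> Y \<kappa>1 \<inter> Y \<kappa>2 = {0}))"

end

theory Submission
  imports Defs
begin
unbundle cardinal_syntax

lemma fin_ordLess_inf: "finite X \<Longrightarrow> infinite Y \<Longrightarrow> |X| <o |Y|"
  by (rule finite_ordLess_infinite[OF card_of_Well_order card_of_Well_order]) (auto simp: Field_card_of)

context vector_space
begin

lemma span_finite_subset:
  assumes "x \<in> span S" obtains T where "finite T" "T \<subseteq> S" "x \<in> span T"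
proof -
  from assms obtain t r where "finite t" "t \<subseteq> S" "x = (\<Sum>a\<in>t. r a *s a)"
    by (auto simp: span_explicit)
  then show ?thesis by (intro that[of t]) (auto intro!: span_sum span_scale intro: span_base)
qed

lemma indep_card_le:
  assumes E: "independent E" and T: "T \<subseteq> span E" and ES: "E \<subseteq> span T" and inf: "infinite T"
  shows "|E| \<le>o |T|"
proof -
  have "\<forall>t\<in>T. \<exists>F. finite F \<and> F \<subseteq> E \<and> t \<in> span F"
    using T span_finite_subset by (metis subsetD)
  then obtain F where F: "\<And>t. t\<in>T \<Longrightarrow> finite (F t) \<and> F t \<subseteq> E \<and> t \<in> span (F t)" by metis
  let ?E' = "\<Union>t\<in>T. F t"
  have TE: "T \<subseteq> span ?E'"
  proof
    fix t assume "t \<in> T"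
    then have "span (F t) \<subseteq> span ?E'" by (intro span_mono) auto
    with F \<open>t \<in> T\<close> show "t \<in> span ?E'" by auto
  qed
  have sub: "E \<subseteq> ?E'"
  proof
    fix e assume e: "e \<in> E"
    show "e \<in> ?E'"
    proof (rule ccontr)
      assume "e \<notin> ?E'"
      hence "?E' \<subseteq> E - {e}" using F by auto
      have "span T \<subseteq> span ?E'" using TE by (intro span_minimal) auto
      also have "\<dots> \<subseteq> span (E - {e})" using \<open>?E' \<subseteq> E - {e}\<close> by (rule span_mono)
      finally have "e \<in> span (E - {e})" using ES e by auto
      thus False using E e dependent_def by auto
    qed
  qed
  have "|?E'| \<le>o |T|"
    by (rule card_of_UNION_ordLeq_infinite[OF inf])
       (auto simp: F fin_ordLess_inf inf ordLess_imp_ordLeq card_of_mono1)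
  thus ?thesis using card_of_mono1[OF sub] ordLeq_transitive by blast
qed

lemma span_disjoint_Int:
  assumes B: "independent B" and S: "S1 \<subseteq> B" "S2 \<subseteq> B" "S1 \<inter> S2 = {}"
  shows "span S1 \<inter> span S2 = {0}"
proof -
  { fix x assume x1: "x \<in> span S1" and x2: "x \<in> span S2"
    have r1: "representation B x = representation S1 x" by (rule representation_extend[OF B x1 S(1)])
    have r2: "representation B x = representation S2 x" by (rule representation_extend[OF B x2 S(2)])
    have z: "\<And>b. representation B x b = 0"
      using representation_ne_zero[of S1 x] representation_ne_zero[of S2 x] r1 r2 S(3) by fastforce
    have "x \<in> span B" using x1 span_mono S(1) by auto
    then have "x = (\<Sum>b | representation B x b \<noteq> 0. representation B x b *s b)"
      using sum_nonzero_representation_eq[OF B] by simp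
    then have "x = 0" using z by simp }
  then show ?thesis by (auto simp: span_zero)
qed

end

lemma tvs_cont:
  fixes sc :: "'k::real_normed_field \<Rightarrow> 'a::{ab_group_add,topological_space} \<Rightarrow> 'a"
  assumes tvs: "tvs sc"
  shows "continuous_on UNIV (\<lambda>t. y0 + sc t y)"
proof -
  have c1: "continuous_on UNIV (\<lambda>(x::'a, y::'a). x + y)"
    and c2: "continuous_on UNIV (\<lambda>(c::'k, x::'a). sc c x)" using tvs by (auto simp: tvs_def)
  have "continuous_on UNIV (\<lambda>t. (\<lambda>(c::'k, x::'a). sc c x) (t, y))"
    by (rule continuous_on_compose2[OF c2]) (auto intro!: continuous_intros)
  then have c3: "continuous_on UNIV (\<lambda>t. sc t y)" by simp
  have "continuous_on UNIV (\<lambda>t. (\<lambda>(x::'a, y::'a). x + y) (y0, sc t y))"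
    by (rule continuous_on_compose2[OF c1]) (auto intro!: continuous_intros c3)
  then show ?thesis by simp
qed

lemma key:
  fixes sc :: "'k::real_normed_field \<Rightarrow> 'a::{ab_group_add,topological_space} \<Rightarrow> 'a"
  assumes tvs: "tvs sc" and Y: "module.subspace sc Y" and dense: "closure Y = UNIV"
    and E: "\<not> module.dependent sc E" "module.span sc E = Y" "|E| =o |A|" and inf: "infinite A"
    and S: "S \<subseteq> Y" "|S| <o |A|" and U: "open U" "U \<noteq> {}"
  shows "\<exists>y\<in>Y \<inter> U. y \<notin> module.span sc S"
proof (rule ccontr)
  interpret V: vector_space sc using tvs by (simp add: tvs_def)
  assume H: "\<not> (\<exists>y\<in>Y \<inter> U. y \<notin> V.span S)"
  have "U \<inter> closure Y \<noteq> {}" using U dense by auto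
  then obtain y0 where y0: "y0 \<in> Y" "y0 \<in> U" using open_Int_closure_eq_empty[OF U(1)] by blast
  let ?T = "insert y0 S"
  have YT: "Y \<subseteq> V.span ?T"
  proof
    fix y assume y: "y \<in> Y"
    have "open ((\<lambda>t. y0 + sc t y) -` U \<inter> UNIV)"
      using tvs_cont[OF tvs, of y0 y] U(1) continuous_on_open_vimage[of UNIV "\<lambda>t. y0 + sc t y"] by simp
    moreover have "(0::'k) \<in> (\<lambda>t. y0 + sc t y) -` U" using y0 by simp
    ultimately obtain e where e: "e > 0" "ball 0 e \<subseteq> (\<lambda>t. y0 + sc t y) -` U"
      unfolding open_contains_ball by force
    define t :: 'k where "t = of_real (e/2)"
    have "t \<in> ball 0 e" using e by (simp add: t_def)
    then have zU: "y0 + sc t y \<in> U" using e by auto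
    have tnz: "t \<noteq> 0" using e by (simp add: t_def)
    have zY: "y0 + sc t y \<in> Y" using Y y y0 by (simp add: V.subspace_add V.subspace_scale)
    have "y0 + sc t y \<in> V.span S" using H zU zY by auto
    then have z: "y0 + sc t y \<in> V.span ?T" using V.span_mono[of S ?T] by auto
    have "y0 \<in> V.span ?T" by (simp add: V.span_base)
    then have "(y0 + sc t y) - y0 \<in> V.span ?T" using z V.span_diff by blast
    then have "sc (inverse t) ((y0 + sc t y) - y0) \<in> V.span ?T" by (rule V.span_scale)
    also have "sc (inverse t) ((y0 + sc t y) - y0) = y" using tnz by simp
    finally show "y \<in> V.span ?T" .
  qed
  have ET: "E \<subseteq> V.span ?T" using YT E(2) V.span_superset by blast
  show False
  proof (cases "finite ?T")
    case True
    then have "finite E" using V.independent_span_bound[OF True] E(1) ET by blast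
    then show False using card_of_ordIso_finite[OF E(3)] inf by simp
  next
    case False
    have TE: "?T \<subseteq> V.span E" using S(1) y0 E(2) by auto
    have "|E| \<le>o |?T|" by (rule V.indep_card_le[OF E(1) TE ET False])
    moreover have "|{y0} \<union> S| <o |A|"
      by (rule card_of_Un_ordLess_infinite[OF inf _ S(2)]) (simp add: fin_ordLess_inf inf)
    ultimately have "|E| <o |A|" using ordLeq_ordLess_trans by (metis insert_is_Un)
    then show False using E(3) not_ordLess_ordIso by blast
  qed
qed


lemma construct:
  fixes sc :: "'k::real_normed_field \<Rightarrow> 'a::{ab_group_add,topological_space} \<Rightarrow> 'a" and A :: "'c set"
  assumes tvs: "tvs sc" and inf: "infinite A" and w: "weight_le A TYPE('a)"
   and dl: "dense_lineable sc M A"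
  shows "inf_dense_lineable sc M A A"
proof -
  interpret V: vector_space sc using tvs by (simp add: tvs_def)
  obtain Y where Ydim: "subspace_of_dim sc Y A" and dense: "closure Y = UNIV" and YM: "Y \<subseteq> M \<union> {0}"
    using dl unfolding dense_lineable_def by auto
  then have Ysub: "V.subspace Y" unfolding subspace_of_dim_def by simp
  obtain E where E: "\<not> V.dependent E" "V.span E = Y" "|E| =o |A|"
    using Ydim unfolding subspace_of_dim_def by auto
  obtain BB :: "'a set set" where BB: "topological_basis BB" "|BB| \<le>o |A|"
    using w unfolding weight_le_def by auto
  define B' where "B' = BB - {{}}"
  define P where "P = B' <+> A"
  define T where "T = A \<times> P"
  define g :: "'c \<times> ('a set + 'c) \<Rightarrow> 'a set"
    where "g p = (case snd p of Inl U \<Rightarrow> U | Inr _ \<Rightarrow> UNIV)" for p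
  have gopen: "open (g p) \<and> g p \<noteq> {}" if "p \<in> T" for p
    using BB(1) that by (auto simp: T_def P_def B'_def g_def topological_basis_open)
  have B'A: "|B'| \<le>o |A|"
    using card_of_mono1[of B' BB] BB(2) ordLeq_transitive unfolding B'_def by blast
  have PA: "|P| =o |A|"
  proof -
    have "|P| \<le>o |A|" unfolding P_def
      by (rule card_of_Plus_ordLeq_infinite_Field)
         (auto simp: Field_card_of inf B'A card_of_Card_order card_of_mono1 card_of_card_order_on)
    moreover have "|A| \<le>o |P|" unfolding P_def by (rule card_of_Plus2)
    ultimately show ?thesis by (simp add: ordIso_iff_ordLeq)
  qed
  have TA: "|T| =o |A|"
  proof -
    have "|T| \<le>o |A \<times> A|" unfolding T_def
      by (rule card_of_Times_mono2) (use PA ordIso_iff_ordLeq in blast)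
    then have "|T| \<le>o |A|" using card_of_Times_same_infinite[OF inf] ordLeq_ordIso_trans by blast
    moreover have "|A| \<le>o |T|"
    proof -
      have "inj_on (\<lambda>a. (a, Inr a)) A" "(\<lambda>a. (a, Inr a)) ` A \<subseteq> T"
        by (auto simp: inj_on_def T_def P_def)
      thus ?thesis using card_of_ordLeq[of A T] by blast
    qed
    ultimately show ?thesis by (simp add: ordIso_iff_ordLeq)
  qed
  obtain h where h: "bij_betw h A T" using card_of_ordIso[of A T] ordIso_symmetric[OF TA] by blast
  define r where "r = |A|"
  have wo: "well_order_on A r" unfolding r_def by (rule card_of_well_order_on)
  have wf: "wf (r - Id)" using wo by (simp add: well_order_on_def)
  have rF: "(a, b) \<in> r \<Longrightarrow> a \<in> A \<and> b \<in> A" for a b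
    using FieldI1[of a b r] FieldI2[of a b r] by (simp add: r_def Field_card_of)
  have rrefl: "a \<in> A \<Longrightarrow> (a, a) \<in> r" for a
    using wo by (auto simp: well_order_on_def linear_order_on_def partial_order_on_def
      preorder_on_def refl_on_def)
  have rtrans: "trans r"
    using wo by (auto simp: well_order_on_def linear_order_on_def partial_order_on_def
      preorder_on_def)
  have rtot: "a \<in> A \<Longrightarrow> b \<in> A \<Longrightarrow> a \<noteq> b \<Longrightarrow> (a, b) \<in> r \<or> (b, a) \<in> r" for a b
    using wo by (auto simp: well_order_on_def linear_order_on_def total_on_def)
  have under_less: "|underS r a| <o |A|" if "a \<in> A" for a
    using card_of_underS[OF card_of_Card_order, of a A] that by (simp add: r_def Field_card_of)
  define H where "H = (\<lambda>F a. SOME y. y \<in> Y \<inter> g (h a) \<and> y \<notin> V.span (F ` underS r a))"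
  define f where "f = wfrec (r - Id) H"
  have feq: "f a = (SOME y. y \<in> Y \<inter> g (h a) \<and> y \<notin> V.span (f ` underS r a))" for a
  proof -
    have "f a = H (cut f (r - Id) a) a" unfolding f_def by (rule wfrec[OF wf])
    moreover have "(cut f (r - Id) a) ` underS r a = f ` underS r a"
      by (auto simp: underS_def cut_apply intro!: image_cong)
    ultimately show ?thesis by (simp add: H_def)
  qed
  have fprop0: "a \<in> A \<longrightarrow> f a \<in> Y \<inter> g (h a) \<and> f a \<notin> V.span (f ` underS r a)" for a
  proof (induct a rule: wf_induct[OF wf])
    case (1 a)
    show ?case
    proof
      assume aA: "a \<in> A"
      have IH: "f ` underS r a \<subseteq> Y"
      proof
        fix z assume "z \<in> f ` underS r a"
        then obtain b where b: "b \<in> underS r a" "z = f b" by blast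
        then have "(b, a) \<in> r - Id" "b \<in> A" using rF by (auto simp: underS_def)
        then show "z \<in> Y" using 1 b by blast
      qed
      have "|f ` underS r a| <o |A|"
        using card_of_image ordLeq_ordLess_trans under_less[OF aA] by blast
      moreover have "h a \<in> T" using h aA bij_betwE by blast
      ultimately obtain y where "y \<in> Y \<inter> g (h a)" "y \<notin> V.span (f ` underS r a)"
        using key[OF tvs Ysub dense E inf IH _ conjunct1[OF gopen] conjunct2[OF gopen]] by blast
      then show "f a \<in> Y \<inter> g (h a) \<and> f a \<notin> V.span (f ` underS r a)"
        unfolding feq[of a] by (rule someI[where P = "\<lambda>y. y \<in> Y \<inter> g (h a) \<and> y \<notin> V.span (f ` underS r a)", OF conjI])
    qed
  qed
  then have fprop: "f a \<in> Y" "f a \<in> g (h a)" "f a \<notin> V.span (f ` underS r a)" if "a \<in> A" for a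
    using that by auto
  have maxex: "\<exists>m\<in>F. \<forall>b\<in>F. (b, m) \<in> r" if "finite F" "F \<noteq> {}" "F \<subseteq> A" for F
    using that
  proof (induction F rule: finite_ne_induct)
    case (singleton x) then show ?case using rrefl by auto
  next
    case (insert x F)
    then obtain m where m: "m \<in> F" "\<forall>b\<in>F. (b, m) \<in> r" by auto
    show ?case
    proof (cases "(m, x) \<in> r")
      case True
      have "\<forall>b\<in>insert x F. (b, x) \<in> r"
      proof
        fix b assume "b \<in> insert x F"
        then show "(b, x) \<in> r"
        proof
          assume "b = x" then show ?thesis using rrefl insert.prems by auto
        next
          assume "b \<in> F" then have "(b, m) \<in> r" using m by auto
          then show ?thesis using True rtrans unfolding trans_def by blast
        qed
      qed
      then show ?thesis by blast
    next
      case False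
      then have "(x, m) \<in> r" using rtot[of m x] rrefl insert.prems m by auto
      then show ?thesis using m by auto
    qed
  qed
  have fin_ind: "inj_on f F \<and> V.independent (f ` F)" if "finite F" "F \<subseteq> A" for F
    using that
  proof (induction "card F" arbitrary: F)
    case 0 then show ?case using V.independent_empty by auto
  next
    case (Suc n)
    then have Fne: "F \<noteq> {}" by auto
    obtain m where m: "m \<in> F" "\<forall>b\<in>F. (b, m) \<in> r"
      using maxex[OF Suc.prems(1) Fne Suc.prems(2)] by blast
    have mA: "m \<in> A" using m(1) Suc.prems(2) by blast
    define G where "G = F - {m}"
    have FG: "F = insert m G" "m \<notin> G" "G - {m} = G" using m(1) by (auto simp: G_def)
    let ?F = G
    have IH: "inj_on f ?F \<and> V.independent (f ` ?F)"
    proof -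
      have "n = card ?F" using Suc.hyps(2) m(1) Suc.prems(1) by (simp add: G_def)
      moreover have "finite ?F" using Suc.prems(1) by (simp add: G_def)
      moreover have "?F \<subseteq> A" using Suc.prems(2) by (auto simp: G_def)
      ultimately show ?thesis by (rule Suc.hyps(1))
    qed
    have "?F \<subseteq> underS r m" using m(2) unfolding underS_def G_def by blast
    then have "f ` ?F \<subseteq> f ` underS r m" by (rule image_mono)
    then have "V.span (f ` ?F) \<subseteq> V.span (f ` underS r m)" by (rule V.span_mono)
    then have ns: "f m \<notin> V.span (f ` ?F)" using fprop(3)[OF mA] by blast
    then have nin: "f m \<notin> f ` ?F" using V.span_base[of "f m" "f ` ?F"] by blast
    have "inj_on f (insert m ?F)" using IH nin FG(3) by simp
    moreover have "V.independent (insert (f m) (f ` ?F))"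
      by (rule V.independent_insertI[OF ns conjunct2[OF IH]])
    ultimately show ?case unfolding FG(1) by simp
  qed
  have injA: "inj_on f A"
  proof (rule inj_onI)
    fix a b assume "a \<in> A" "b \<in> A" "f a = f b"
    moreover have "inj_on f {a, b}" using fin_ind[of "{a, b}"] \<open>a \<in> A\<close> \<open>b \<in> A\<close> by simp
    ultimately show "a = b" by (cases "a = b") auto
  qed
  have indA: "V.independent (f ` A)"
  proof
    assume "V.dependent (f ` A)"
    then obtain x where x: "x \<in> f ` A" "x \<in> V.span (f ` A - {x})" by (auto simp: V.dependent_def)
    obtain T0 where T0: "finite T0" "T0 \<subseteq> f ` A - {x}" "x \<in> V.span T0"
      by (rule V.span_finite_subset[OF x(2)])
    have "insert x T0 - {x} = T0" using T0(2) by auto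
    then have dep: "V.dependent (insert x T0)" unfolding V.dependent_def using T0(3) by auto
    have "insert x T0 \<subseteq> f ` A" using x(1) T0(2) by auto
    then obtain F where F: "F \<subseteq> A" "finite F" "insert x T0 = f ` F"
      using finite_subset_image[of "insert x T0" f A] T0(1) by (metis finite_insert)
    then show False using fin_ind[of F] dep by simp
  qed
  define Ak where "Ak k = {a \<in> A. fst (h a) = k}" for k
  define Yf where "Yf k = V.span (f ` Ak k)" for k
  have hAk: "h ` Ak k = {k} \<times> P" if "k \<in> A" for k
  proof
    show "h ` Ak k \<subseteq> {k} \<times> P"
    proof
      fix p assume "p \<in> h ` Ak k"
      then obtain a where a: "a \<in> A" "fst (h a) = k" "p = h a" by (auto simp: Ak_def)
      then have "h a \<in> A \<times> P" using h by (auto simp: bij_betw_def T_def)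
      then show "p \<in> {k} \<times> P" using a by (cases "h a") auto
    qed
    show "{k} \<times> P \<subseteq> h ` Ak k"
    proof
      fix p assume p: "p \<in> {k} \<times> P"
      then have "p \<in> T" using that by (auto simp: T_def)
      then obtain a where "a \<in> A" "h a = p" using h by (auto simp: bij_betw_def)
      then show "p \<in> h ` Ak k" using p by (auto simp: Ak_def)
    qed
  qed
  have dim: "subspace_of_dim sc (Yf k) A" if k: "k \<in> A" for k
    unfolding subspace_of_dim_def
  proof (intro conjI exI[of _ "f ` Ak k"])
    show "V.subspace (Yf k)" by (simp add: Yf_def)
    have "f ` Ak k \<subseteq> f ` A" by (auto simp: Ak_def)
    then show "\<not> V.dependent (f ` Ak k)" by (rule V.independent_mono[OF indA])
    show "V.span (f ` Ak k) = Yf k" by (simp add: Yf_def)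
    have AkA: "Ak k \<subseteq> A" by (auto simp: Ak_def)
    have "|f ` Ak k| =o |Ak k|"
      using inj_on_imp_bij_betw[OF inj_on_subset[OF injA AkA]] card_of_ordIso[of "Ak k" "f ` Ak k"] ordIso_symmetric by blast
    moreover have "|Ak k| =o |{k} \<times> P|"
      using bij_betw_subset[OF h AkA hAk[OF k]] card_of_ordIso[of "Ak k" "{k} \<times> P"] by blast
    moreover have "|{k} \<times> P| =o |P|"
    proof -
      have "bij_betw snd ({k} \<times> P) P" by (auto simp: bij_betw_def inj_on_def)
      then show ?thesis using card_of_ordIso[of "{k} \<times> P" P] by blast
    qed
    ultimately show "|f ` Ak k| =o |A|" using PA ordIso_transitive[of "|f ` Ak k|" "|Ak k|"] ordIso_transitive[of "|Ak k|" "|{k} \<times> P|"] ordIso_transitive[of "|{k} \<times> P|" "|P|"] by blast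
  qed
  have dens: "closure (Yf k) = UNIV" if k: "k \<in> A" for k
  proof -
    { fix x assume x: "x \<notin> closure (Yf k)"
      then obtain U where U: "U \<in> BB" "x \<in> U" "U \<subseteq> - closure (Yf k)"
        using topological_basisE[OF BB(1), of "- closure (Yf k)" x] by auto
      then have "U \<in> B'" by (auto simp: B'_def)
      then have "(k, Inl U) \<in> T" using k by (auto simp: T_def P_def)
      then obtain a where a: "a \<in> A" "h a = (k, Inl U)" using h by (auto simp: bij_betw_def)
      then have "f a \<in> U" using fprop(2)[OF a(1)] by (simp add: g_def)
      moreover have "f a \<in> Yf k" using a by (auto simp: Yf_def Ak_def intro!: V.span_base)
      ultimately have False using U(3) closure_subset by blast }
    then show ?thesis by auto
  qed
  have sub: "Yf k \<subseteq> M \<union> {0}" if k: "k \<in> A" for k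
  proof -
    have "f ` Ak k \<subseteq> Y" using fprop(1) by (auto simp: Ak_def)
    then have "Yf k \<subseteq> Y" unfolding Yf_def using V.span_minimal Ysub by blast
    then show ?thesis using YM by blast
  qed
  have disj: "Yf k1 \<inter> Yf k2 = {0}" if "k1 \<in> A" "k2 \<in> A" "k1 \<noteq> k2" for k1 k2
  proof -
    have "f ` Ak k1 \<inter> f ` Ak k2 = f ` (Ak k1 \<inter> Ak k2)"
      by (rule inj_on_image_Int[OF injA, symmetric]) (auto simp: Ak_def)
    also have "Ak k1 \<inter> Ak k2 = {}" using that by (auto simp: Ak_def)
    finally show ?thesis unfolding Yf_def
      by (intro V.span_disjoint_Int[OF indA]) (auto simp: Ak_def)
  qed
  have h1: "\<forall>k\<in>A. subspace_of_dim sc (Yf k) A \<and> closure (Yf k) = UNIV \<and> Yf k \<subseteq> M \<union> {0}"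
    using dim dens sub by blast
  have h2: "\<forall>k1\<in>A. \<forall>k2\<in>A. k1 \<noteq> k2 \<longrightarrow> Yf k1 \<inter> Yf k2 = {0}"
    using disj by blast
  show ?thesis unfolding inf_dense_lineable_def
    by (rule exI[of _ Yf], rule conjI[OF h1 h2])
qed

lemma main:
  fixes sc :: "'k::real_normed_field \<Rightarrow> 'a::{ab_group_add,topological_space} \<Rightarrow> 'a" and A :: "'c set"
  shows "tvs sc \<and> infinite A \<and> weight_le A TYPE('a) \<longrightarrow>
            (dense_lineable sc M A \<longleftrightarrow> inf_dense_lineable sc M A A)"
proof
  assume a: "tvs sc \<and> infinite A \<and> weight_le A TYPE('a)"
  then have tvs: "tvs sc" and inf: "infinite A" and w: "weight_le A TYPE('a)" by auto
  show "dense_lineable sc M A \<longleftrightarrow> inf_dense_lineable sc M A A"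
  proof
    assume "dense_lineable sc M A"
    then show "inf_dense_lineable sc M A A" by (rule construct[OF tvs inf w])
  next
    assume "inf_dense_lineable sc M A A"
    then obtain Yf where Yf: "\<forall>k\<in>A. subspace_of_dim sc (Yf k) A \<and> closure (Yf k) = UNIV \<and> Yf k \<subseteq> M \<union> {0}"
      unfolding inf_dense_lineable_def by auto
    obtain k where k: "k \<in> A" using inf infinite_imp_nonempty[of A] by (metis ex_in_conv)
    show "dense_lineable sc M A"
      unfolding dense_lineable_def using Yf k by (intro exI[of _ "Yf k"]) simp
  qed
qed

theorem theorem3p2:
  shows "(\<forall>(sc :: real \<Rightarrow> 'a::{ab_group_add,topological_space} \<Rightarrow> 'a) (M :: 'a set) (A :: 'c set).
            tvs sc \<and> infinite A \<and> weight_le A TYPE('a) \<longrightarrow>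
            (dense_lineable sc M A \<longleftrightarrow> inf_dense_lineable sc M A A))
       \<and> (\<forall>(sc :: complex \<Rightarrow> 'b::{ab_group_add,topological_space} \<Rightarrow> 'b) (M :: 'b set) (A :: 'd set).
            tvs sc \<and> infinite A \<and> weight_le A TYPE('b) \<longrightarrow>
            (dense_lineable sc M A \<longleftrightarrow> inf_dense_lineable sc M A A))"
  by (intro conjI allI main)

end
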